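(* Let $G$ be a group, $n$ a positive integer, and let $\alpha_i:H_i\to H_i'$ for $i=1,\dots,r$ be isomorphisms between finite-index subgroups of $G$ such that the subindices of $H_i$ and of $H_i'$ in $G$ are at most $n$ for all $i$. Then every finite product of the classes $[\alpha_i]$ (and their inverses) in $\mathrm{Comm}(G)$ can be represented by an isomorphism $\beta:H\to H'$ where $H,H'$ are finite-index subgroups of $G$ whose subindices in $G$ are at most $n$.
   Context: For a finite-index subgroup $H\leqslant G$, the subindex of $H$ in $G$ is the minimal $n$ such that there is a chain of subgroups $H=G_0\leqslant G_1\leqslant\cdots\leqslant G_k=G$ with $[G_i:G_{i-1}]\le n$ for all $i$. The abstract commensurator $\mathrm{Comm}(G)$ is the group of equivalence classes $[\varphi]$ of isomorphisms between finite-index subgroups of $G$, two being equivalent if they agree on some finite-index subgroup on which both are defined; the product of $\alpha:G_1\to G_1'$ and $\beta:G_2\to G_2'$ is $\alpha\beta:\alpha^{-1}(G_1'\cap G_2)\to\beta(G_1'\cap G_2)$, and the inverse of $[\alpha]$ is $[\alpha^{-1}]$. *)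

theory Defs
  imports "HOL-Algebra.Algebra"
begin

definition rel_index :: "('a, 'b) monoid_scheme \<Rightarrow> 'a set \<Rightarrow> 'a set \<Rightarrow> nat" where
  "rel_index G H K = card (rcosets\<^bsub>G\<lparr>carrier := K\<rparr>\<^esub> H)"

definition fin_index_in :: "('a, 'b) monoid_scheme \<Rightarrow> 'a set \<Rightarrow> 'a set \<Rightarrow> bool" where
  "fin_index_in G H K \<longleftrightarrow> subgroup H G \<and> subgroup K G \<and> H \<subseteq> K
      \<and> finite (rcosets\<^bsub>G\<lparr>carrier := K\<rparr>\<^esub> H)"

definition fi_subgroup :: "('a, 'b) monoid_scheme \<Rightarrow> 'a set \<Rightarrow> bool" where
  "fi_subgroup G H \<longleftrightarrow> fin_index_in G H (carrier G)"

definition index_chain :: "('a, 'b) monoid_scheme \<Rightarrow> 'a set \<Rightarrow> nat \<Rightarrow> 'a set list \<Rightarrow> bool" where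
  "index_chain G H m Ks \<longleftrightarrow> Ks \<noteq> [] \<and> hd Ks = H \<and> last Ks = carrier G
      \<and> (\<forall>K\<in>set Ks. subgroup K G)
      \<and> (\<forall>i. Suc i < length Ks \<longrightarrow>
            fin_index_in G (Ks ! i) (Ks ! Suc i) \<and> rel_index G (Ks ! i) (Ks ! Suc i) \<le> m)"

definition subindex :: "('a, 'b) monoid_scheme \<Rightarrow> 'a set \<Rightarrow> nat" where
  "subindex G H = (LEAST m. \<exists>Ks. index_chain G H m Ks)"

text \<open>Partial isomorphisms: (domain, codomain, map), an isomorphism between finite-index subgroups.\<close>
type_synonym 'a piso = "'a set \<times> 'a set \<times> ('a \<Rightarrow> 'a)"

definition is_piso :: "('a, 'b) monoid_scheme \<Rightarrow> 'a piso \<Rightarrow> bool" where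
  "is_piso G p \<longleftrightarrow> (case p of (H, H', f) \<Rightarrow>
      fi_subgroup G H \<and> fi_subgroup G H' \<and> f \<in> iso (G\<lparr>carrier := H\<rparr>) (G\<lparr>carrier := H'\<rparr>))"

text \<open>Product alpha beta : alpha^{-1}(G1' \<inter> G2) \<rightarrow> beta(G1' \<inter> G2) (first alpha, then beta).\<close>
definition piso_mult :: "'a piso \<Rightarrow> 'a piso \<Rightarrow> 'a piso" where
  "piso_mult p q = (case p of (H1, H1', a) \<Rightarrow> case q of (H2, H2', b) \<Rightarrow>
      ({x \<in> H1. a x \<in> H2}, b ` (H1' \<inter> H2), b \<circ> a))"

definition piso_inv :: "'a piso \<Rightarrow> 'a piso" where
  "piso_inv p = (case p of (H, H', a) \<Rightarrow> (H', H, inv_into H a))"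

definition piso_one :: "('a, 'b) monoid_scheme \<Rightarrow> 'a piso" where
  "piso_one G = (carrier G, carrier G, id)"

definition comm_equiv :: "('a, 'b) monoid_scheme \<Rightarrow> 'a piso \<Rightarrow> 'a piso \<Rightarrow> bool" where
  "comm_equiv G p q \<longleftrightarrow> (case p of (A, A', f) \<Rightarrow> case q of (B, B', g) \<Rightarrow>
      (\<exists>K. fi_subgroup G K \<and> K \<subseteq> A \<and> K \<subseteq> B \<and> (\<forall>x\<in>K. f x = g x)))"

text \<open>Product of a word in the generators: (i, False) stands for [alpha_i], (i, True) for [alpha_i]^{-1}.\<close>
definition word_prod :: "('a, 'b) monoid_scheme \<Rightarrow> (nat \<Rightarrow> 'a piso) \<Rightarrow> (nat \<times> bool) list \<Rightarrow> 'a piso" where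
  "word_prod G gen w = foldl piso_mult (piso_one G)
      (map (\<lambda>(i, e). if e then piso_inv (gen i) else gen i) w)"

end

theory Submission imports Defs
begin


lemma rcosets_sub: "rcosets\<^bsub>G\<lparr>carrier := L\<rparr>\<^esub> H = (\<lambda>x. H #>\<^bsub>G\<^esub> x) ` L"
  by (auto simp: RCOSETS_def r_coset_def)

inductive ch :: "('a,'b) monoid_scheme \<Rightarrow> nat \<Rightarrow> 'a set \<Rightarrow> 'a set \<Rightarrow> bool" for G m where
  refl: "subgroup H G \<Longrightarrow> ch G m H H"
| step: "fin_index_in G H K \<Longrightarrow> rel_index G H K \<le> m \<Longrightarrow> ch G m K L \<Longrightarrow> ch G m H L"

lemma ch_trans: "ch G m H K \<Longrightarrow> ch G m K L \<Longrightarrow> ch G m H L"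
  by (induction rule: ch.induct) (auto intro: ch.step)

lemma ch_subgroup: "ch G m H L \<Longrightarrow> subgroup H G \<and> subgroup L G"
  by (induction rule: ch.induct) (auto simp: fin_index_in_def)

lemma ch_to_list: "ch G m H L \<Longrightarrow> \<exists>Ks. Ks \<noteq> [] \<and> hd Ks = H \<and> last Ks = L
      \<and> (\<forall>K\<in>set Ks. subgroup K G)
      \<and> (\<forall>i. Suc i < length Ks \<longrightarrow>
            fin_index_in G (Ks ! i) (Ks ! Suc i) \<and> rel_index G (Ks ! i) (Ks ! Suc i) \<le> m)"
proof (induction rule: ch.induct)
  case (refl H)
  then show ?case by (intro exI[of _ "[H]"]) auto
next
  case (step H K L)
  then obtain Ks where Ks: "Ks \<noteq> [] \<and> hd Ks = K \<and> last Ks = L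
      \<and> (\<forall>K\<in>set Ks. subgroup K G)
      \<and> (\<forall>i. Suc i < length Ks \<longrightarrow>
            fin_index_in G (Ks ! i) (Ks ! Suc i) \<and> rel_index G (Ks ! i) (Ks ! Suc i) \<le> m)" by blast
  have st: "\<forall>i. Suc i < length (H # Ks) \<longrightarrow> fin_index_in G ((H # Ks) ! i) ((H # Ks) ! Suc i) \<and> rel_index G ((H # Ks) ! i) ((H # Ks) ! Suc i) \<le> m"
  proof (intro allI impI)
    fix i assume i: "Suc i < length (H # Ks)"
    show "fin_index_in G ((H # Ks) ! i) ((H # Ks) ! Suc i) \<and> rel_index G ((H # Ks) ! i) ((H # Ks) ! Suc i) \<le> m"
    proof (cases i)
      case 0 then show ?thesis using Ks step hd_conv_nth[of Ks] by simp
    next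
      case (Suc j) then show ?thesis using Ks i by simp
    qed
  qed
  show ?case
    apply (rule exI[of _ "H # Ks"])
    using Ks step st by (auto simp: fin_index_in_def)
qed

lemma list_to_ch: "Ks \<noteq> [] \<Longrightarrow> (\<forall>K\<in>set Ks. subgroup K G)
      \<Longrightarrow> (\<forall>i. Suc i < length Ks \<longrightarrow>
            fin_index_in G (Ks ! i) (Ks ! Suc i) \<and> rel_index G (Ks ! i) (Ks ! Suc i) \<le> m)
      \<Longrightarrow> ch G m (hd Ks) (last Ks)"
proof (induction Ks)
  case Nil then show ?case by simp
next
  case (Cons K Ks)
  show ?case
  proof (cases Ks)
    case Nil then show ?thesis using Cons by (auto intro: ch.refl)
  next
    case (Cons K' Ks')
    have "ch G m (hd Ks) (last Ks)"
      apply (rule Cons.IH)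
      using Cons.prems \<open>Ks = _\<close> apply simp_all
      by (metis Suc_less_eq length_Cons nth_Cons_Suc)
    moreover have "fin_index_in G K K'" "rel_index G K K' \<le> m"
      using Cons.prems(3)[rule_format, of 0] \<open>Ks = _\<close> by auto
    ultimately show ?thesis using \<open>Ks = _\<close> by (auto intro: ch.step)
  qed
qed

lemma (in group) coset_eq_inter:
  assumes K: "subgroup K G" and M: "subgroup M G" and x: "x \<in> M" "x \<in> carrier G"
    and y: "y \<in> M" "y \<in> carrier G" and e: "K #> x = K #> y"
  shows "(K \<inter> M) #> x = (K \<inter> M) #> y"
proof -
  have "x \<in> K #> y" using e rcos_self[OF x(2) K] by simp
  hence "x \<otimes> inv y \<in> K" using subgroup.rcos_module_imp[OF K is_group y(2)] by blast
  moreover have "x \<otimes> inv y \<in> M" using M x y by (simp add: subgroup.m_closed subgroup.m_inv_closed)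
  ultimately have "x \<in> (K \<inter> M) #> y"
    using subgroup.rcos_module_rev[OF subgroups_Inter_pair[OF K M] is_group y(2) x(2)] by blast
  thus ?thesis using repr_independence[OF _ y(2) subgroups_Inter_pair[OF K M]] by simp
qed

lemma (in group) fin_inter:
  assumes "fin_index_in G K L" "subgroup M G"
  shows "fin_index_in G (K \<inter> M) (L \<inter> M) \<and> rel_index G (K \<inter> M) (L \<inter> M) \<le> rel_index G K L"
proof -
  have K: "subgroup K G" and L: "subgroup L G" and KL: "K \<subseteq> L" and fin: "finite ((\<lambda>x. K #> x) ` L)"
    using assms(1) by (auto simp: fin_index_in_def rcosets_sub)
  define g where "g C = (K \<inter> M) #> (SOME x. x \<in> L \<inter> M \<and> C = K #> x)" for C
  have eq: "(\<lambda>x. (K \<inter> M) #> x) ` (L \<inter> M) = g ` ((\<lambda>x. K #> x) ` (L \<inter> M))"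
  proof -
    have "(K \<inter> M) #> x = g (K #> x)" if x: "x \<in> L \<inter> M" for x
    proof -
      define y where "y = (SOME y. y \<in> L \<inter> M \<and> K #> x = K #> y)"
      have y: "y \<in> L \<inter> M \<and> K #> x = K #> y" unfolding y_def by (rule someI[of _ x]) (use x in auto)
      have "(K \<inter> M) #> x = (K \<inter> M) #> y"
        apply (rule coset_eq_inter[OF K assms(2)])
        using x y subgroup.subset[OF L] by auto
      thus ?thesis unfolding g_def y_def by simp
    qed
    thus ?thesis by (auto simp: image_comp)
  qed
  have sub: "(\<lambda>x. K #> x) ` (L \<inter> M) \<subseteq> (\<lambda>x. K #> x) ` L" by auto
  have f2: "finite ((\<lambda>x. K #> x) ` (L \<inter> M))" using finite_subset[OF sub fin] .
  have "card ((\<lambda>x. (K \<inter> M) #> x) ` (L \<inter> M)) \<le> card ((\<lambda>x. K #> x) ` (L \<inter> M))"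
    unfolding eq by (rule card_image_le[OF f2])
  also have "\<dots> \<le> card ((\<lambda>x. K #> x) ` L)" by (rule card_mono[OF fin sub])
  finally show ?thesis
    using K L KL assms(2) f2 eq
    by (auto simp: fin_index_in_def rel_index_def rcosets_sub subgroups_Inter_pair)
qed


lemma (in group) fin_trans:
  assumes "fin_index_in G K L" "fin_index_in G L N" shows "fin_index_in G K N"
proof -
  have K: "subgroup K G" and L: "subgroup L G" and N: "subgroup N G" and KL: "K \<subseteq> L" and LN: "L \<subseteq> N"
    and f1: "finite ((\<lambda>x. K #> x) ` L)" and f2: "finite ((\<lambda>x. L #> x) ` N)"
    using assms by (auto simp: fin_index_in_def rcosets_sub)
  define F where "F = (\<lambda>(A, B). A #> (SOME g. g \<in> B))"
  have "(\<lambda>x. K #> x) ` N \<subseteq> F ` (((\<lambda>x. K #> x) ` L) \<times> ((\<lambda>x. L #> x) ` N))"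
  proof
    fix C assume "C \<in> (\<lambda>x. K #> x) ` N"
    then obtain x where x: "x \<in> N" and C: "C = K #> x" by auto
    have xc: "x \<in> carrier G" using x subgroup.subset[OF N] by auto
    define g where "g = (SOME g. g \<in> L #> x)"
    have "g \<in> L #> x" unfolding g_def by (rule someI[of _ x]) (rule rcos_self[OF xc L])
    then obtain l where l: "l \<in> L" and gl: "g = l \<otimes> x" by (auto simp: r_coset_def)
    have lc: "l \<in> carrier G" using l subgroup.subset[OF L] by auto
    have "(K #> inv l) #> g = K #> (inv l \<otimes> g)"
      using coset_mult_assoc[OF subgroup.subset[OF K]] lc xc gl by simp
    also have "inv l \<otimes> g = x" using gl lc xc by (simp add: m_assoc[symmetric])
    finally have "C = F (K #> inv l, L #> x)" unfolding F_def g_def C by simp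
    moreover have "K #> inv l \<in> (\<lambda>x. K #> x) ` L" using l subgroup.m_inv_closed[OF L] by auto
    ultimately show "C \<in> F ` (((\<lambda>x. K #> x) ` L) \<times> ((\<lambda>x. L #> x) ` N))" using x by blast
  qed
  hence "finite ((\<lambda>x. K #> x) ` N)" by (rule finite_subset) (use f1 f2 in auto)
  thus ?thesis using K N KL LN by (auto simp: fin_index_in_def rcosets_sub)
qed

lemma (in group) fin_refl: "subgroup H G \<Longrightarrow> fin_index_in G H H"
proof -
  assume H: "subgroup H G"
  have "(\<lambda>x. H #> x) ` H \<subseteq> {H}" using coset_join2[OF _ H] subgroup.subset[OF H] by auto
  hence "finite ((\<lambda>x. H #> x) ` H)" by (rule finite_subset) auto
  thus ?thesis using H by (auto simp: fin_index_in_def rcosets_sub)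
qed

lemma (in group) ch_fin: "ch G m H L \<Longrightarrow> fin_index_in G H L"
  by (induction rule: ch.induct) (auto intro: fin_refl fin_trans)


lemma (in group) img_subgroup:
  assumes H1: "subgroup H1 G" and H1': "subgroup H1' G"
    and f: "f \<in> iso (G\<lparr>carrier := H1\<rparr>) (G\<lparr>carrier := H1'\<rparr>)"
    and K: "subgroup K G" and KH: "K \<subseteq> H1"
  shows "subgroup (f ` K) G"
proof -
  have gh: "group_hom (G\<lparr>carrier := H1\<rparr>) (G\<lparr>carrier := H1'\<rparr>) f"
    by (simp add: group_hom_def group_hom_axioms_def subgroup_imp_group H1 H1' iso_imp_homomorphism f)
  have "subgroup K (G\<lparr>carrier := H1\<rparr>)" by (rule subgroup_incl[OF K H1 KH])
  hence "subgroup (f ` K) (G\<lparr>carrier := H1'\<rparr>)" by (rule group_hom.subgroup_img_is_subgroup[OF gh])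
  thus ?thesis by (rule incl_subgroup[OF H1'])
qed

lemma img_coset:
  assumes f: "f \<in> iso (G\<lparr>carrier := H1\<rparr>) (G\<lparr>carrier := H1'\<rparr>)"
    and x: "x \<in> H1" and KH: "K \<subseteq> H1"
  shows "f ` (K #>\<^bsub>G\<^esub> x) = (f ` K) #>\<^bsub>G\<^esub> f x"
proof -
  have hm: "\<And>a b. a \<in> H1 \<Longrightarrow> b \<in> H1 \<Longrightarrow> f (a \<otimes>\<^bsub>G\<^esub> b) = f a \<otimes>\<^bsub>G\<^esub> f b"
    using f by (auto simp: iso_def hom_def)
  show ?thesis
    apply (auto simp: r_coset_def)
    subgoal for h using hm[of h x] x KH by (auto simp: r_coset_def)
    subgoal for h by (rule image_eqI[of _ _ "h \<otimes>\<^bsub>G\<^esub> x"]) (use hm[of h x] x KH in auto)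
    done
qed

lemma (in group) fin_img:
  assumes H1: "subgroup H1 G" and H1': "subgroup H1' G"
    and f: "f \<in> iso (G\<lparr>carrier := H1\<rparr>) (G\<lparr>carrier := H1'\<rparr>)"
    and fi: "fin_index_in G K L" and LH: "L \<subseteq> H1"
  shows "fin_index_in G (f ` K) (f ` L) \<and> rel_index G (f ` K) (f ` L) \<le> rel_index G K L"
proof -
  have K: "subgroup K G" and L: "subgroup L G" and KL: "K \<subseteq> L" and fin: "finite ((\<lambda>x. K #> x) ` L)"
    using fi by (auto simp: fin_index_in_def rcosets_sub)
  have eq: "(\<lambda>y. (f ` K) #> y) ` (f ` L) = (\<lambda>C. f ` C) ` ((\<lambda>x. K #> x) ` L)"
  proof -
    have "(\<lambda>y. (f ` K) #> y) ` (f ` L) = (\<lambda>x. (f ` K) #> f x) ` L" by (simp add: image_image)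
    also have "\<dots> = (\<lambda>x. f ` (K #> x)) ` L"
      by (rule image_cong[OF HOL.refl]) (use img_coset[OF f, of _ K] KL LH in blast)
    also have "\<dots> = (\<lambda>C. f ` C) ` ((\<lambda>x. K #> x) ` L)" by (simp add: image_image)
    finally show ?thesis .
  qed
  show ?thesis
    using img_subgroup[OF H1 H1' f K] img_subgroup[OF H1 H1' f L] KL LH fin eq card_image_le[OF fin, of "\<lambda>C. f ` C"]
    by (auto simp: fin_index_in_def rel_index_def rcosets_sub)
qed

lemma ch_sub: "ch G m H L \<Longrightarrow> H \<subseteq> L"
  by (induction rule: ch.induct) (auto simp: fin_index_in_def)

lemma (in group) ch_img:
  assumes H1: "subgroup H1 G" and H1': "subgroup H1' G"
    and f: "f \<in> iso (G\<lparr>carrier := H1\<rparr>) (G\<lparr>carrier := H1'\<rparr>)"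
  shows "ch G m K L \<Longrightarrow> L \<subseteq> H1 \<Longrightarrow> ch G m (f ` K) (f ` L)"
proof (induction rule: ch.induct)
  case (refl H)
  then show ?case using img_subgroup[OF H1 H1' f] by (auto intro: ch.refl)
next
  case (step H K L)
  have "K \<subseteq> H1" using ch_sub[OF step(3)] step(5) by auto
  then show ?case using fin_img[OF H1 H1' f step(1)] step by (auto intro: ch.step)
qed

lemma (in group) ch_inter:
  assumes M: "subgroup M G"
  shows "ch G m K L \<Longrightarrow> ch G m (K \<inter> M) (L \<inter> M)"
proof (induction rule: ch.induct)
  case (refl H)
  then show ?case using subgroups_Inter_pair M by (auto intro: ch.refl)
next
  case (step H K L)
  then show ?case using fin_inter[OF step(1) M] by (auto intro: ch.step)
qed


definition good :: "('a, 'b) monoid_scheme \<Rightarrow> nat \<Rightarrow> 'a piso \<Rightarrow> bool" where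
  "good G n p \<longleftrightarrow> (case p of (H, H', f) \<Rightarrow> subgroup H G \<and> subgroup H' G
     \<and> f \<in> iso (G\<lparr>carrier := H\<rparr>) (G\<lparr>carrier := H'\<rparr>) \<and> ch G n H (carrier G) \<and> ch G n H' (carrier G))"

lemma (in group) good_one: "good G n (piso_one G)"
  using id_iso[of G] subgroup_self by (auto simp: good_def piso_one_def intro: ch.refl)

lemma (in group) good_inv: assumes "good G n p" shows "good G n (piso_inv p)"
proof -
  obtain H H' f where p: "p = (H, H', f)" by (cases p) auto
  have H: "subgroup H G" and f: "f \<in> iso (G\<lparr>carrier := H\<rparr>) (G\<lparr>carrier := H'\<rparr>)"
    using assms p by (auto simp: good_def)
  have "inv_into (carrier (G\<lparr>carrier := H\<rparr>)) f \<in> iso (G\<lparr>carrier := H'\<rparr>) (G\<lparr>carrier := H\<rparr>)"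
    by (rule group.iso_set_sym[OF subgroup_imp_group[OF H] f])
  thus ?thesis using assms p by (auto simp: good_def piso_inv_def)
qed

lemma (in group) good_mult: assumes "good G n p" "good G n q" shows "good G n (piso_mult p q)"
proof -
  obtain H1 H1' a where p: "p = (H1, H1', a)" by (cases p) auto
  obtain H2 H2' b where q: "q = (H2, H2', b)" by (cases q) auto
  have H1: "subgroup H1 G" and H1': "subgroup H1' G" and a: "a \<in> iso (G\<lparr>carrier := H1\<rparr>) (G\<lparr>carrier := H1'\<rparr>)"
    and c1: "ch G n H1 (carrier G)" and c1': "ch G n H1' (carrier G)"
    using assms(1) p by (auto simp: good_def)
  have H2: "subgroup H2 G" and H2': "subgroup H2' G" and b: "b \<in> iso (G\<lparr>carrier := H2\<rparr>) (G\<lparr>carrier := H2'\<rparr>)"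
    and c2: "ch G n H2 (carrier G)" and c2': "ch G n H2' (carrier G)"
    using assms(2) q by (auto simp: good_def)
  define ai where "ai = inv_into H1 a"
  have ai: "ai \<in> iso (G\<lparr>carrier := H1'\<rparr>) (G\<lparr>carrier := H1\<rparr>)"
    using group.iso_set_sym[OF subgroup_imp_group[OF H1] a] by (simp add: ai_def)
  have abij: "bij_betw a H1 H1'" and bbij: "bij_betw b H2 H2'" using a b by (auto simp: iso_def)
  have aibij: "bij_betw ai H1' H1" using ai by (auto simp: iso_def)
  define D where "D = {x \<in> H1. a x \<in> H2}"
  define E where "E = b ` (H1' \<inter> H2)"
  have Deq: "D = ai ` (H2 \<inter> H1')"
  proof
    show "D \<subseteq> ai ` (H2 \<inter> H1')"
    proof
      fix x assume "x \<in> D"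
      hence x: "x \<in> H1" "a x \<in> H2" by (auto simp: D_def)
      have "ai (a x) = x" using abij x(1) by (simp add: ai_def bij_betw_def inv_into_f_f)
      moreover have "a x \<in> H1'" using abij x(1) by (auto simp: bij_betw_def)
      ultimately show "x \<in> ai ` (H2 \<inter> H1')" using x(2) by (metis IntI image_eqI)
    qed
  next
    show "ai ` (H2 \<inter> H1') \<subseteq> D"
    proof
      fix x assume "x \<in> ai ` (H2 \<inter> H1')"
      then obtain y where y: "y \<in> H2" "y \<in> H1'" and x: "x = ai y" by auto
      have "a x = y" using abij y(2) x by (simp add: ai_def bij_betw_def f_inv_into_f)
      moreover have "x \<in> H1" using aibij y(2) x by (auto simp: bij_betw_def)
      ultimately show "x \<in> D" using y by (simp add: D_def)
    qed
  qed
  have "ch G n (H2 \<inter> H1') (carrier G \<inter> H1')" by (rule ch_inter[OF H1' c2])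
  hence "ch G n (H2 \<inter> H1') H1'" using subgroup.subset[OF H1'] by (simp add: Int_absorb1)
  hence "ch G n (ai ` (H2 \<inter> H1')) (ai ` H1')" by (rule ch_img[OF H1' H1 ai]) simp
  moreover have "ai ` H1' = H1" using aibij by (simp add: bij_betw_def)
  ultimately have cD: "ch G n D (carrier G)" using ch_trans c1 Deq by metis
  have "ch G n (H1' \<inter> H2) (carrier G \<inter> H2)" by (rule ch_inter[OF H2 c1'])
  hence "ch G n (H1' \<inter> H2) H2" using subgroup.subset[OF H2] by (simp add: Int_absorb1)
  hence "ch G n (b ` (H1' \<inter> H2)) (b ` H2)" by (rule ch_img[OF H2 H2' b]) simp
  moreover have "b ` H2 = H2'" using bbij by (simp add: bij_betw_def)
  ultimately have cE: "ch G n E (carrier G)" using ch_trans c2' E_def by metis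
  have ham: "\<And>x y. x \<in> H1 \<Longrightarrow> y \<in> H1 \<Longrightarrow> a (x \<otimes> y) = a x \<otimes> a y" using a by (auto simp: iso_def hom_def)
  have hbm: "\<And>x y. x \<in> H2 \<Longrightarrow> y \<in> H2 \<Longrightarrow> b (x \<otimes> y) = b x \<otimes> b y" using b by (auto simp: iso_def hom_def)
  have b1: "bij_betw a D (H1' \<inter> H2)"
  proof -
    have "inj_on a D" using abij by (auto simp: bij_betw_def D_def intro: inj_on_subset)
    moreover have "a ` D = H1' \<inter> H2"
    proof
      show "a ` D \<subseteq> H1' \<inter> H2" using abij by (auto simp: D_def bij_betw_def)
    next
      show "H1' \<inter> H2 \<subseteq> a ` D"
      proof
        fix y assume y: "y \<in> H1' \<inter> H2"
        have "y = a (ai y)" using abij y by (simp add: ai_def bij_betw_def f_inv_into_f)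
        moreover have "ai y \<in> D" using Deq y by auto
        ultimately show "y \<in> a ` D" by blast
      qed
    qed
    ultimately show ?thesis by (simp add: bij_betw_def)
  qed
  have b2: "bij_betw b (H1' \<inter> H2) E"
    using bbij by (auto simp: bij_betw_def E_def intro: inj_on_subset)
  have iso: "(b \<circ> a) \<in> iso (G\<lparr>carrier := D\<rparr>) (G\<lparr>carrier := E\<rparr>)"
  proof -
    have "bij_betw (b \<circ> a) D E" by (rule bij_betw_trans[OF b1 b2])
    moreover have "\<forall>x\<in>D. \<forall>y\<in>D. (b \<circ> a) (x \<otimes> y) = (b \<circ> a) x \<otimes> (b \<circ> a) y"
      using ham hbm by (auto simp: D_def)
    ultimately show ?thesis by (auto simp: iso_def hom_def bij_betw_def)
  qed
  show ?thesis using cD cE iso ch_subgroup[OF cD] ch_subgroup[OF cE] p q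
    by (simp add: good_def piso_mult_def D_def E_def)
qed


lemma ch_mono: "ch G m H L \<Longrightarrow> m \<le> n \<Longrightarrow> ch G n H L"
  by (induction rule: ch.induct) (auto intro: ch.intros)

lemma fi_ch:
  assumes fi: "fi_subgroup G H" and s: "subindex G H \<le> n"
  shows "ch G n H (carrier G)"
proof -
  have ex: "\<exists>m Ks. index_chain G H m Ks"
    apply (rule exI[of _ "rel_index G H (carrier G)"], rule exI[of _ "[H, carrier G]"])
    using fi by (auto simp: index_chain_def fi_subgroup_def fin_index_in_def less_Suc_eq)
  have "\<exists>Ks. index_chain G H (subindex G H) Ks"
    unfolding subindex_def by (rule LeastI_ex) (use ex in blast)
  then obtain Ks where Ks: "index_chain G H (subindex G H) Ks" by blast
  have "ch G (subindex G H) (hd Ks) (last Ks)"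
    using Ks unfolding index_chain_def by (intro list_to_ch) auto
  hence "ch G (subindex G H) H (carrier G)" using Ks by (simp add: index_chain_def)
  thus ?thesis using ch_mono s by blast
qed

lemma ch_subindex: assumes "ch G n H (carrier G)" shows "subindex G H \<le> n"
proof -
  obtain Ks where "index_chain G H n Ks" using ch_to_list[OF assms] unfolding index_chain_def by blast
  thus ?thesis unfolding subindex_def by (rule Least_le[where P="\<lambda>m. \<exists>Ks. index_chain G H m Ks", OF exI])
qed

lemma (in group) good_foldl: "good G n p \<Longrightarrow> \<forall>q\<in>set qs. good G n q \<Longrightarrow> good G n (foldl piso_mult p qs)"
proof (induction qs arbitrary: p)
  case Nil then show ?case by simp
next
  case (Cons q qs)
  have "good G n (piso_mult p q)" using good_mult[of n p q] Cons.prems by simp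
  then show ?case using Cons.IH Cons.prems by simp
qed

theorem lemma2p5:
  fixes G :: "('a, 'b) monoid_scheme" and n r :: nat
    and gen :: "nat \<Rightarrow> 'a piso"
    and w :: "(nat \<times> bool) list"
  assumes "group G" and "0 < n"
    and "\<And>i. i < r \<Longrightarrow> is_piso G (gen i)"
    and "\<And>i. i < r \<Longrightarrow> subindex G (fst (gen i)) \<le> n \<and> subindex G (fst (snd (gen i))) \<le> n"
    and "\<forall>(i, e) \<in> set w. i < r"
  shows "\<exists>H H' \<beta>. is_piso G (H, H', \<beta>) \<and> subindex G H \<le> n \<and> subindex G H' \<le> n
           \<and> comm_equiv G (H, H', \<beta>) (word_prod G gen w)"
proof -
  interpret group G by fact
  have gg: "good G n (gen i)" if i: "i < r" for i
  proof -
    obtain H H' f where p: "gen i = (H, H', f)" by (cases "gen i") auto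
    have "is_piso G (H, H', f)" using assms(3)[OF i] p by simp
    moreover have "subindex G H \<le> n" "subindex G H' \<le> n" using assms(4)[OF i] p by auto
    ultimately show ?thesis using p fi_ch[of G H n] fi_ch[of G H' n]
      by (auto simp: good_def is_piso_def fi_subgroup_def fin_index_in_def)
  qed
  have "\<forall>q\<in>set (map (\<lambda>(i, e). if e then piso_inv (gen i) else gen i) w). good G n q"
  proof
    fix q assume "q \<in> set (map (\<lambda>(i, e). if e then piso_inv (gen i) else gen i) w)"
    then obtain i e where ie: "(i, e) \<in> set w" and q: "q = (if e then piso_inv (gen i) else gen i)" by auto
    have "i < r" using assms(5) ie by auto
    thus "good G n q" using gg[of i] good_inv[of n "gen i"] q by auto
  qed
  hence g: "good G n (word_prod G gen w)"
    unfolding word_prod_def by (intro good_foldl good_one)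
  obtain H H' \<beta> where wp: "word_prod G gen w = (H, H', \<beta>)" by (cases "word_prod G gen w") auto
  have cH: "ch G n H (carrier G)" and cH': "ch G n H' (carrier G)"
    and iso: "\<beta> \<in> iso (G\<lparr>carrier := H\<rparr>) (G\<lparr>carrier := H'\<rparr>)"
    using g wp by (auto simp: good_def)
  have fH: "fi_subgroup G H" "fi_subgroup G H'" using ch_fin[OF cH] ch_fin[OF cH'] by (auto simp: fi_subgroup_def)
  show ?thesis
    apply (rule exI[of _ H], rule exI[of _ H'], rule exI[of _ \<beta>])
    using fH iso ch_subindex[OF cH] ch_subindex[OF cH'] wp
    by (auto simp: is_piso_def comm_equiv_def)
qed


end
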